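(* Let $i\geq 5$ and $j\geq 1$ be integers. Then $$R_1^{\mathcal{CA}}(i,j)=\begin{cases}2j-1, & \text{if } j \text{ is odd},\\ 2j-2, & \text{if } j \text{ is even},\end{cases}$$ where $\mathcal{CA}$ is the class of cacti.
   Context: All graphs are finite and simple. For a graph $G$ and a nonnegative integer $k$, a $k$-sparse $j$-set is a set of $j$ vertices of $G$ inducing a subgraph of maximum degree at most $k$; a $k$-dense $i$-set is a set of $i$ vertices of $G$ that is $k$-sparse in the complement of $G$. For a graph class $\mathcal{G}$, $R_k^{\mathcal{G}}(i,j)$ is the smallest natural number $n$ such that every graph on $n$ vertices in $\mathcal{G}$ has either a $k$-dense $i$-set or a $k$-sparse $j$-set. A cactus is a graph (not necessarily connected) in which every block (maximal 2-connected subgraph, bridge, or isolated vertex) is a cycle, a single edge, or a single vertex. *)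

theory Defs
  imports Main
begin

definition simple_graph :: "'a set \<Rightarrow> ('a \<Rightarrow> 'a \<Rightarrow> bool) \<Rightarrow> bool" where
  "simple_graph V E \<longleftrightarrow> finite V \<and> (\<forall>x y. E x y \<longrightarrow> x \<in> V \<and> y \<in> V)
     \<and> (\<forall>x y. E x y \<longrightarrow> E y x) \<and> (\<forall>x. \<not> E x x)"

definition deg_in :: "('a \<Rightarrow> 'a \<Rightarrow> bool) \<Rightarrow> 'a set \<Rightarrow> 'a \<Rightarrow> nat" where
  "deg_in E S x = card {y \<in> S. E x y}"

definition connected_in :: "('a \<Rightarrow> 'a \<Rightarrow> bool) \<Rightarrow> 'a set \<Rightarrow> bool" where
  "connected_in E S \<longleftrightarrow> S \<noteq> {} \<and>
     (\<forall>u\<in>S. \<forall>v\<in>S. (\<lambda>x y. E x y \<and> x \<in> S \<and> y \<in> S)\<^sup>*\<^sup>* u v)"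

definition nonseparable :: "('a \<Rightarrow> 'a \<Rightarrow> bool) \<Rightarrow> 'a set \<Rightarrow> bool" where
  "nonseparable E S \<longleftrightarrow> connected_in E S \<and>
     (\<forall>v\<in>S. S - {v} \<noteq> {} \<longrightarrow> connected_in E (S - {v}))"

definition is_block :: "'a set \<Rightarrow> ('a \<Rightarrow> 'a \<Rightarrow> bool) \<Rightarrow> 'a set \<Rightarrow> bool" where
  "is_block V E B \<longleftrightarrow> B \<subseteq> V \<and> nonseparable E B \<and>
     (\<forall>B'. B \<subset> B' \<and> B' \<subseteq> V \<longrightarrow> \<not> nonseparable E B')"

text \<open>Cactus: every block is a single vertex, a single edge, or a cycle
  (a cycle = connected 2-regular graph on at least 3 vertices).\<close>
definition cactus :: "'a set \<Rightarrow> ('a \<Rightarrow> 'a \<Rightarrow> bool) \<Rightarrow> bool" where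
  "cactus V E \<longleftrightarrow> simple_graph V E \<and>
     (\<forall>B. is_block V E B \<longrightarrow> card B \<le> 2 \<or> (card B \<ge> 3 \<and> (\<forall>x\<in>B. deg_in E B x = 2)))"

definition sparse_set :: "('a \<Rightarrow> 'a \<Rightarrow> bool) \<Rightarrow> 'a set \<Rightarrow> nat \<Rightarrow> nat \<Rightarrow> 'a set \<Rightarrow> bool" where
  "sparse_set E V k j S \<longleftrightarrow> S \<subseteq> V \<and> card S = j \<and> (\<forall>x\<in>S. deg_in E S x \<le> k)"

definition dense_set :: "('a \<Rightarrow> 'a \<Rightarrow> bool) \<Rightarrow> 'a set \<Rightarrow> nat \<Rightarrow> nat \<Rightarrow> 'a set \<Rightarrow> bool" where
  "dense_set E V k i S \<longleftrightarrow> sparse_set (\<lambda>x y. x \<noteq> y \<and> \<not> E x y) V k i S"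

text \<open>R_k^C(i,j): smallest n such that every graph in class C on n vertices
  (w.l.o.g. vertex set {0..<n}) has a k-dense i-set or a k-sparse j-set.\<close>
definition ramsey_class ::
  "(nat set \<Rightarrow> (nat \<Rightarrow> nat \<Rightarrow> bool) \<Rightarrow> bool) \<Rightarrow> nat \<Rightarrow> nat \<Rightarrow> nat \<Rightarrow> nat" where
  "ramsey_class C k i j = (LEAST n. \<forall>E. simple_graph {0..<n} E \<and> C {0..<n} E \<longrightarrow>
      (\<exists>S. dense_set E {0..<n} k i S) \<or> (\<exists>S. sparse_set E {0..<n} k j S))"

end

theory Submission
  imports Defs
begin


abbreviation rel :: "('a \<Rightarrow> 'a \<Rightarrow> bool) \<Rightarrow> 'a set \<Rightarrow> 'a \<Rightarrow> 'a \<Rightarrow> bool" where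
  "rel E S \<equiv> (\<lambda>x y. E x y \<and> x \<in> S \<and> y \<in> S)"

lemma reach_mono: "(rel E S)\<^sup>*\<^sup>* u v \<Longrightarrow> S \<subseteq> S' \<Longrightarrow> (rel E S')\<^sup>*\<^sup>* u v"
  by (induction rule: rtranclp_induct) (auto intro: rtranclp.rtrancl_into_rtrancl)

lemma reach_sym:
  assumes sym: "\<forall>x y. E x y \<longrightarrow> E y x" and r: "(rel E S)\<^sup>*\<^sup>* u v"
  shows "(rel E S)\<^sup>*\<^sup>* v u"
  using r
proof (induction rule: rtranclp_induct)
  case base
  then show ?case by simp
next
  case (step y z)
  then have "rel E S z y" using sym by blast
  then show ?case using step(3) by (rule converse_rtranclp_into_rtranclp)
qed

lemma conn_union:
  assumes "connected_in E A" "connected_in E B" "A \<inter> B \<noteq> {}"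
  shows "connected_in E (A \<union> B)"
proof -
  obtain c where c: "c \<in> A" "c \<in> B" using assms(3) by blast
  have r: "(rel E (A \<union> B))\<^sup>*\<^sup>* u c \<and> (rel E (A \<union> B))\<^sup>*\<^sup>* c u" if "u \<in> A \<union> B" for u
  proof (cases "u \<in> A")
    case True
    then have "(rel E A)\<^sup>*\<^sup>* u c" "(rel E A)\<^sup>*\<^sup>* c u" using assms(1) c unfolding connected_in_def by auto
    then show ?thesis using reach_mono[of E A u c "A \<union> B"] reach_mono[of E A c u "A \<union> B"] by blast
  next
    case False
    then have "u \<in> B" using that by blast
    then have "(rel E B)\<^sup>*\<^sup>* u c" "(rel E B)\<^sup>*\<^sup>* c u" using assms(2) c unfolding connected_in_def by auto
    then show ?thesis using reach_mono[of E B u c "A \<union> B"] reach_mono[of E B c u "A \<union> B"] by blast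
  qed
  show ?thesis unfolding connected_in_def
  proof (intro conjI ballI)
    show "A \<union> B \<noteq> {}" using c by blast
  next
    fix u v assume "u \<in> A \<union> B" "v \<in> A \<union> B"
    then show "(rel E (A \<union> B))\<^sup>*\<^sup>* u v" using r by (meson rtranclp_trans)
  qed
qed

lemma nonsep_union:
  assumes nA: "nonseparable E A" and nB: "nonseparable E B"
    and ab: "a \<in> A" "a \<in> B" "b \<in> A" "b \<in> B" "a \<noteq> b"
  shows "nonseparable E (A \<union> B)"
proof -
  have cA: "connected_in E (A - {v})" for v
  proof (cases "v \<in> A")
    case True
    have "A - {v} \<noteq> {}" using ab by blast
    then show ?thesis using nA True unfolding nonseparable_def by blast
  next
    case False
    then have "A - {v} = A" by simp
    then show ?thesis using nA unfolding nonseparable_def by simp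
  qed
  have cB: "connected_in E (B - {v})" for v
  proof (cases "v \<in> B")
    case True
    have "B - {v} \<noteq> {}" using ab by blast
    then show ?thesis using nB True unfolding nonseparable_def by blast
  next
    case False
    then have "B - {v} = B" by simp
    then show ?thesis using nB unfolding nonseparable_def by simp
  qed
  have "connected_in E (A - {v} \<union> (B - {v}))" for v
  proof (rule conn_union[OF cA cB])
    show "(A - {v}) \<inter> (B - {v}) \<noteq> {}" using ab by blast
  qed
  moreover have "A \<union> B - {v} = A - {v} \<union> (B - {v})" for v by blast
  ultimately have "connected_in E (A \<union> B - {v})" for v by simp
  moreover have "connected_in E (A \<union> B)"
  proof (rule conn_union)
    show "connected_in E A" using nA unfolding nonseparable_def by simp
    show "connected_in E B" using nB unfolding nonseparable_def by simp
    show "A \<inter> B \<noteq> {}" using ab by blast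
  qed
  ultimately show ?thesis unfolding nonseparable_def by blast
qed

fun walk :: "('a \<Rightarrow> 'a \<Rightarrow> bool) \<Rightarrow> 'a list \<Rightarrow> bool" where
  "walk E [] = True"
| "walk E [x] = True"
| "walk E (x # y # xs) = (E x y \<and> walk E (y # xs))"

lemma walk_Cons: "walk E (x # xs) \<longleftrightarrow> walk E xs \<and> (xs \<noteq> [] \<longrightarrow> E x (hd xs))"
  by (cases xs) auto

lemma walk_append:
  "walk E (xs @ ys) \<longleftrightarrow> walk E xs \<and> walk E ys \<and> (xs \<noteq> [] \<longrightarrow> ys \<noteq> [] \<longrightarrow> E (last xs) (hd ys))"
  by (induction xs) (auto simp: walk_Cons)

lemma walk_take: "walk E xs \<Longrightarrow> walk E (take n xs)"
  using walk_append[of E "take n xs" "drop n xs"] by simp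

lemma walk_drop: "walk E xs \<Longrightarrow> walk E (drop n xs)"
  using walk_append[of E "take n xs" "drop n xs"] by simp

lemma walk_nth: "walk E xs \<Longrightarrow> Suc i < length xs \<Longrightarrow> E (xs ! i) (xs ! Suc i)"
proof (induction E xs arbitrary: i rule: walk.induct)
  case (3 E x y xs)
  then show ?case by (cases i) auto
qed auto

lemma walk_reach:
  assumes "walk E xs" "xs \<noteq> []"
  shows "\<forall>u\<in>set xs. (rel E (set xs))\<^sup>*\<^sup>* (hd xs) u"
  using assms
proof (induction xs)
  case Nil
  then show ?case by simp
next
  case (Cons x ys)
  show ?case
  proof (cases "ys = []")
    case True
    then show ?thesis by simp
  next
    case False
    have w: "walk E ys" "E x (hd ys)" using Cons.prems False by (auto simp: walk_Cons)
    have h: "hd ys \<in> set ys" using False by simp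
    have IH: "(rel E (set (x # ys)))\<^sup>*\<^sup>* (hd ys) u" if "u \<in> set ys" for u
      using Cons.IH[OF w(1) False] that reach_mono[of E "set ys" "hd ys" u "set (x # ys)"] by auto
    have st: "rel E (set (x # ys)) x (hd ys)" using w(2) h by simp
    have "(rel E (set (x # ys)))\<^sup>*\<^sup>* x u" if "u \<in> set ys" for u
    proof -
      have "(rel E (set (x # ys)))\<^sup>*\<^sup>* (hd ys) u" using that IH by blast
      with st show ?thesis by (rule converse_rtranclp_into_rtranclp)
    qed
    then show ?thesis by auto
  qed
qed

lemma walk_conn:
  assumes sym: "\<forall>x y. E x y \<longrightarrow> E y x" and "walk E xs" "xs \<noteq> []"
  shows "connected_in E (set xs)"
  unfolding connected_in_def
proof (intro conjI ballI)
  show "set xs \<noteq> {}" using assms by simp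
next
  fix u v assume "u \<in> set xs" "v \<in> set xs"
  then show "(rel E (set xs))\<^sup>*\<^sup>* u v"
    using walk_reach[OF assms(2,3)] reach_sym[OF sym] by (meson rtranclp_trans)
qed

lemma cycle_nonsep:
  assumes sym: "\<forall>x y. E x y \<longrightarrow> E y x" and w: "walk E xs" and d: "distinct xs"
    and l: "3 \<le> length xs" and c: "E (last xs) (hd xs)"
  shows "nonseparable E (set xs)"
  unfolding nonseparable_def
proof (intro conjI ballI impI)
  have "xs \<noteq> []" using l by auto
  then show "connected_in E (set xs)" using walk_conn[OF sym w] by blast
next
  fix v assume v: "v \<in> set xs" and ne: "set xs - {v} \<noteq> {}"
  obtain ys zs where xs: "xs = ys @ v # zs" using split_list[OF v] by blast
  have st: "set xs - {v} = set (zs @ ys)" using d xs by auto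
  have wys: "walk E ys" and wzs: "walk E zs" using w xs by (auto simp: walk_append walk_Cons)
  have "walk E (zs @ ys)"
  proof -
    have "zs \<noteq> [] \<longrightarrow> ys \<noteq> [] \<longrightarrow> E (last zs) (hd ys)"
      using c xs by auto
    then show ?thesis using wys wzs by (simp add: walk_append)
  qed
  moreover have "zs @ ys \<noteq> []" using ne st by auto
  ultimately have "connected_in E (set (zs @ ys))" using walk_conn[OF sym] by blast
  then show "connected_in E (set xs - {v})" by (simp only: st)
qed



definition is_path :: "('a \<Rightarrow> 'a \<Rightarrow> bool) \<Rightarrow> 'a set \<Rightarrow> 'a list \<Rightarrow> bool" where
  "is_path E V xs \<longleftrightarrow> walk E xs \<and> distinct xs \<and> set xs \<subseteq> V"

definition longest :: "('a \<Rightarrow> 'a \<Rightarrow> bool) \<Rightarrow> 'a set \<Rightarrow> 'a list \<Rightarrow> bool" where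
  "longest E V P \<longleftrightarrow> is_path E V P \<and> (\<forall>Q. is_path E V Q \<longrightarrow> length Q \<le> length P)"

lemma longest_ex:
  assumes "finite V" "V \<noteq> {}"
  shows "\<exists>P. longest E V P \<and> P \<noteq> []"
proof -
  let ?L = "length ` {xs. is_path E V xs}"
  have "?L \<subseteq> {..card V}"
  proof
    fix n assume "n \<in> ?L"
    then obtain xs where "is_path E V xs" "n = length xs" by blast
    then have "card (set xs) = n" "set xs \<subseteq> V" unfolding is_path_def by (auto simp: distinct_card)
    then show "n \<in> {..card V}" using card_mono[OF assms(1)] by auto
  qed
  then have fin: "finite ?L" using finite_subset by blast
  obtain v where v: "v \<in> V" using assms(2) by blast
  have pv: "is_path E V [v]" using v unfolding is_path_def by simp
  then have ne: "?L \<noteq> {}" by blast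
  have "Max ?L \<in> ?L" using Max_in[OF fin ne] .
  then obtain P where P: "is_path E V P" "length P = Max ?L" by auto
  have "\<forall>Q. is_path E V Q \<longrightarrow> length Q \<le> length P"
    using P(2) Max_ge[OF fin] by auto
  moreover have "P \<noteq> []" using Max_ge[OF fin, of 1] pv P(2) by force
  ultimately show ?thesis using P(1) unfolding longest_def by blast
qed

lemma longest_end:
  assumes sym: "\<forall>x y. E x y \<longrightarrow> E y x" and L: "longest E V P" and ne: "P \<noteq> []"
    and y: "y \<in> V" "E (hd P) y"
  shows "y \<in> set P"
proof (rule ccontr)
  assume n: "y \<notin> set P"
  have "is_path E V (y # P)" using L n y sym ne unfolding longest_def is_path_def
    by (auto simp: walk_Cons)
  then have "length (y # P) \<le> length P" using L unfolding longest_def by blast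
  then show False by simp
qed

definition cac :: "('a \<Rightarrow> 'a \<Rightarrow> bool) \<Rightarrow> 'a set \<Rightarrow> bool" where
  "cac E V \<longleftrightarrow> (\<forall>S \<subseteq> V. nonseparable E S \<longrightarrow> 3 \<le> card S \<longrightarrow> (\<forall>x\<in>S. deg_in E S x \<le> 2))"

lemma cac_mono: "cac E V \<Longrightarrow> V' \<subseteq> V \<Longrightarrow> cac E V'"
  unfolding cac_def by blast

lemma three_nbrs_false:
  assumes fin: "finite V" and cac: "cac E V" and C: "C \<subseteq> V" "nonseparable E C"
    and x: "x \<in> C" and pqr: "p \<in> C" "q \<in> C" "r \<in> C" "p \<noteq> q" "p \<noteq> r" "q \<noteq> r"
    and e: "E x p" "E x q" "E x r"
  shows False
proof -
  have fC: "finite C" using fin C finite_subset by blast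
  have "card {p, q, r} = 3" using pqr by simp
  then have c3: "3 \<le> card C" using card_mono[OF fC, of "{p,q,r}"] pqr by simp
  have "{p, q, r} \<subseteq> {y \<in> C. E x y}" using pqr e by auto
  then have "3 \<le> deg_in E C x" unfolding deg_in_def
    using card_mono[of "{y \<in> C. E x y}" "{p,q,r}"] fC \<open>card {p, q, r} = 3\<close> by simp
  moreover have "deg_in E C x \<le> 2" using cac C c3 x unfolding cac_def by blast
  ultimately show False by simp
qed

lemma theta_false:
  assumes fin: "finite V" and cac: "cac E V" and C: "C1 \<subseteq> V" "nonseparable E C1" "C2 \<subseteq> V" "nonseparable E C2"
    and ab: "a \<in> C1" "a \<in> C2" "b \<in> C1" "b \<in> C2" "a \<noteq> b"
    and x: "x \<in> C1 \<union> C2" and pqr: "p \<in> C1 \<union> C2" "q \<in> C1 \<union> C2" "r \<in> C1 \<union> C2" "p \<noteq> q" "p \<noteq> r" "q \<noteq> r"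
    and e: "E x p" "E x q" "E x r"
  shows False
proof -
  have "nonseparable E (C1 \<union> C2)" using nonsep_union[OF C(2) C(4) ab] .
  moreover have "C1 \<union> C2 \<subseteq> V" using C by blast
  ultimately show False using three_nbrs_false[OF fin cac _ _ x pqr e] by blast
qed

lemma seg:
  assumes w: "walk E P" and d: "distinct P" and j: "1 \<le> j" "j < length P"
  defines "L \<equiv> take j (drop 1 P)"
  shows "walk E L" "distinct L" "length L = j" "hd L = P ! 1" "last L = P ! j"
    "\<And>i. i < j \<Longrightarrow> L ! i = P ! Suc i" "set L \<subseteq> set P"
proof -
  show "walk E L" unfolding L_def by (intro walk_take walk_drop w)
  show "distinct L" unfolding L_def using d by simp
  show lL: "length L = j" unfolding L_def using j by simp
  show nth: "\<And>i. i < j \<Longrightarrow> L ! i = P ! Suc i" unfolding L_def using j by simp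
  have Lne: "L \<noteq> []" using lL j by auto
  show "hd L = P ! 1" using nth[of 0] j Lne by (simp add: hd_conv_nth)
  show "last L = P ! j" using nth[of "j - 1"] j lL Lne by (simp add: last_conv_nth)
  show "set L \<subseteq> set P" unfolding L_def by (meson set_drop_subset set_take_subset subset_trans)
qed

lemma nth_in_take: "i < n \<Longrightarrow> i < length xs \<Longrightarrow> xs ! i \<in> set (take n xs)"
  by (metis in_set_conv_nth length_take min_less_iff_conj nth_take)



definition bnd :: "nat \<Rightarrow> nat" where "bnd n = (n+1) div 2 + (if n mod 4 = 2 then 1 else 0)"

lemma bnd_le4: "c \<le> 4 \<Longrightarrow> bnd c \<le> 2" unfolding bnd_def by presburger
lemma bnd_1: "bnd 1 = 1" by (simp add: bnd_def)

abbreviation nbhd :: "('a \<Rightarrow> 'a \<Rightarrow> bool) \<Rightarrow> 'a set \<Rightarrow> 'a set \<Rightarrow> 'a set" where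
  "nbhd E V T \<equiv> T \<union> {y \<in> V. \<exists>t\<in>T. E t y}"

lemma card4: "card {a,b,c,d} \<le> 4"
  using card_length[of "[a,b,c,d]"] by simp

lemma finish2:
  assumes "T \<subseteq> V" "card T = 2" "nbhd E V T \<subseteq> {a,b,c,d}"
  shows "\<exists>T \<subseteq> V. T \<noteq> {} \<and> card T \<le> 2 \<and> bnd (card (nbhd E V T)) \<le> card T"
proof -
  have "card (nbhd E V T) \<le> card {a,b,c,d}" by (rule card_mono[OF _ assms(3)]) simp
  then have "card (nbhd E V T) \<le> 4" using card4[of a b c d] by linarith
  then have "bnd (card (nbhd E V T)) \<le> card T" using bnd_le4 assms(2) by simp
  moreover have "T \<noteq> {}" using assms(2) by auto
  ultimately show ?thesis using assms(1,2) by (intro exI[of _ T]) auto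
qed

lemma good_T:
  assumes fin: "finite V" and ne: "V \<noteq> {}" and sym: "\<forall>x y. E x y \<longrightarrow> E y x"
    and irr: "\<forall>x. \<not> E x x" and cac: "cac E V"
  shows "\<exists>T \<subseteq> V. T \<noteq> {} \<and> card T \<le> 2 \<and> bnd (card (nbhd E V T)) \<le> card T"
proof -
  obtain P where L: "longest E V P" and Pne: "P \<noteq> []" using longest_ex[OF fin ne] by blast
  have wP: "walk E P" and dP: "distinct P" and sP: "set P \<subseteq> V"
    using L unfolding longest_def is_path_def by auto
  have PV: "i < length P \<Longrightarrow> P ! i \<in> V" for i using sP nth_mem by blast
  have Pinj: "i < length P \<Longrightarrow> k < length P \<Longrightarrow> i \<noteq> k \<Longrightarrow> P ! i \<noteq> P ! k" for i k
    using dP by (simp add: nth_eq_iff_index_eq)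
  define v0 where "v0 = P ! 0"
  have hdP: "hd P = v0" using Pne by (simp add: v0_def hd_conv_nth)
  have v0V: "v0 \<in> V" using PV Pne v0_def by simp
  have N0P: "y \<in> set P" if "y \<in> V" "E v0 y" for y using longest_end[OF sym L Pne] that hdP by simp
  show ?thesis
  proof (cases "length P = 1")
    case True
    then have "set P = {v0}" using v0_def by (cases P) auto
    have "{y \<in> V. E v0 y} = {}"
    proof -
      have "\<not> E v0 y" if "y \<in> V" for y
        using N0P[OF that] \<open>set P = {v0}\<close> irr by auto
      then show ?thesis by auto
    qed
    then have eq: "nbhd E V {v0} = {v0}" by auto
    have "bnd (card (nbhd E V {v0})) \<le> card {v0}" unfolding eq using bnd_1 by simp
    then show ?thesis using v0V by (intro exI[of _ "{v0}"]) auto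
  next
    case False
    have "length P \<noteq> 0" using Pne by simp
    then have l2: "2 \<le> length P" using False by linarith
    define v1 where "v1 = P ! 1"
    have e01: "E v0 v1" using walk_nth[OF wP, of 0] l2 v0_def v1_def by simp
    have v01: "v0 \<noteq> v1" using e01 irr by auto
    have v1V: "v1 \<in> V" using PV l2 v1_def by simp
    define W where "W = {w \<in> V. E v1 w \<and> w \<noteq> v0 \<and> (3 \<le> length P \<longrightarrow> w \<noteq> P ! 2)}"
    have N1: "{y \<in> V. E v1 y} \<subseteq> {v0, P ! 2} \<union> W" unfolding W_def by auto
    have bad: "3 \<le> length P \<and> (\<exists>C \<subseteq> V. nonseparable E C \<and> w \<in> C \<and> v1 \<in> C \<and> P ! 2 \<in> C)"
      if wW: "w \<in> W" and wb: "w \<in> set P \<or> (\<exists>y\<in>V. E w y \<and> y \<noteq> v1)" for w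
    proof -
      have wV: "w \<in> V" and ew: "E v1 w" and wv0: "w \<noteq> v0" and w2: "3 \<le> length P \<longrightarrow> w \<noteq> P ! 2"
        using wW unfolding W_def by auto
      have wv1: "w \<noteq> v1" using ew irr by auto
      show ?thesis
      proof (cases "w \<in> set P")
        case True
        then obtain j where j: "j < length P" "w = P ! j" by (auto simp: in_set_conv_nth)
        have "j \<noteq> 0"
        proof
          assume "j = 0" then have "w = v0" using j v0_def by simp
          with wv0 show False by simp
        qed
        moreover have "j \<noteq> 1"
        proof
          assume "j = 1" then have "w = v1" using j v1_def by simp
          with wv1 show False by simp
        qed
        ultimately have l3: "3 \<le> length P" using j by auto
        then have "j \<noteq> 2" using j w2 by auto
        then have j3: "3 \<le> j" using \<open>j \<noteq> 0\<close> \<open>j \<noteq> 1\<close> by auto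
        define Lc where "Lc = take j (drop 1 P)"
        have s: "walk E Lc" "distinct Lc" "length Lc = j" "hd Lc = P ! 1" "last Lc = P ! j"
           "\<And>i. i < j \<Longrightarrow> Lc ! i = P ! Suc i" "set Lc \<subseteq> set P"
          using seg[OF wP dP _ j(1)] j3 unfolding Lc_def by auto
        have "nonseparable E (set Lc)"
        proof (rule cycle_nonsep[OF sym s(1) s(2)])
          show "3 \<le> length Lc" using s(3) j3 by simp
          show "E (last Lc) (hd Lc)" using s(4,5) j ew sym v1_def by auto
        qed
        moreover have "w \<in> set Lc"
        proof -
          have "Lc ! (j - 1) \<in> set Lc" using s(3) j3 by (intro nth_mem) auto
          moreover have "Lc ! (j - 1) = w" using s(6)[of "j - 1"] j3 j(2) by simp
          ultimately show ?thesis by simp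
        qed
        moreover have "v1 \<in> set Lc"
        proof -
          have "Lc ! 0 \<in> set Lc" using s(3) j3 by (intro nth_mem) auto
          then show ?thesis using s(6)[of 0] j3 v1_def by simp
        qed
        moreover have "P ! 2 \<in> set Lc"
        proof -
          have "Lc ! 1 \<in> set Lc" using s(3) j3 by (intro nth_mem) auto
          then show ?thesis using s(6)[of 1] j3 by (simp add: numeral_2_eq_2)
        qed
        moreover have "set Lc \<subseteq> V" using s(7) sP by blast
        ultimately show ?thesis using l3 by blast
      next
        case False
        then obtain y where y: "y \<in> V" "E w y" "y \<noteq> v1" using wb by blast
        define Q where "Q = w # drop 1 P"
        have hd1: "hd (drop 1 P) = v1" using l2 v1_def by (simp add: hd_drop_conv_nth)
        have pQ: "is_path E V Q"
          unfolding is_path_def Q_def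
        proof (intro conjI)
          show "walk E (w # drop 1 P)" using walk_drop[OF wP, of 1] hd1 ew sym by (auto simp: walk_Cons)
          show "distinct (w # drop 1 P)" using False dP by (auto dest: in_set_dropD)
          show "set (w # drop 1 P) \<subseteq> V" using wV sP by (auto dest: in_set_dropD)
        qed
        have lQ: "length Q = length P" using l2 unfolding Q_def by simp
        have LQ: "longest E V Q" using pQ lQ L unfolding longest_def by simp
        have "y \<in> set Q" using longest_end[OF sym LQ _ y(1)] y(2) unfolding Q_def by simp
        moreover have "y \<noteq> w" using y(2) irr by auto
        ultimately have "y \<in> set (drop 1 P)" unfolding Q_def by simp
        then obtain i where i: "i < length P - 1" "y = P ! Suc i"
          by (auto simp: in_set_conv_nth)
        define j where "j = Suc i"
        have "j \<noteq> 1" using i y(3) v1_def j_def by (cases i) auto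
        then have j2: "2 \<le> j" using j_def by simp
        have jl: "j < length P" using i j_def by simp
        have l3: "3 \<le> length P" using j2 jl by simp
        define Lc where "Lc = take j (drop 1 P)"
        have s: "walk E Lc" "distinct Lc" "length Lc = j" "hd Lc = P ! 1" "last Lc = P ! j"
           "\<And>i. i < j \<Longrightarrow> Lc ! i = P ! Suc i" "set Lc \<subseteq> set P"
          using seg[OF wP dP _ jl] j2 unfolding Lc_def by auto
        have Lcne: "Lc \<noteq> []" using s(3) j2 by auto
        have "nonseparable E (set (w # Lc))"
        proof (rule cycle_nonsep[OF sym])
          show "walk E (w # Lc)" using s(1,4) Lcne ew sym v1_def by (auto simp: walk_Cons)
          show "distinct (w # Lc)" using s(2,7) False by auto
          show "3 \<le> length (w # Lc)" using s(3) j2 by simp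
          show "E (last (w # Lc)) (hd (w # Lc))" using s(5) Lcne y(2) i(2) j_def sym by auto
        qed
        moreover have "v1 \<in> set (w # Lc)"
        proof -
          have "Lc ! 0 \<in> set Lc" using s(3) j2 by (intro nth_mem) auto
          then show ?thesis using s(6)[of 0] j2 v1_def by simp
        qed
        moreover have "P ! 2 \<in> set (w # Lc)"
        proof -
          have "Lc ! 1 \<in> set Lc" using s(3) j2 by (intro nth_mem) auto
          then show ?thesis using s(6)[of 1] j2 by (simp add: numeral_2_eq_2)
        qed
        moreover have "set (w # Lc) \<subseteq> V" using s(7) sP wV by auto
        ultimately show ?thesis using l3 by (intro conjI exI[of _ "set (w # Lc)"]) auto
      qed
    qed
    define I where "I = {i. i < length P \<and> E v0 (P ! i)}"
    have finI: "finite I" unfolding I_def by simp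
    have oneI: "1 \<in> I" unfolding I_def using l2 e01 v1_def by simp
    define a where "a = Max I"
    have aI: "a \<in> I" using Max_in[OF finI] oneI a_def by blast
    have a1: "1 \<le> a" using Max_ge[OF finI oneI] a_def by simp
    have al: "a < length P" using aI I_def by simp
    have ea: "E v0 (P ! a)" using aI I_def by simp
    have ile: "i \<in> I \<Longrightarrow> i \<le> a" for i using Max_ge[OF finI] a_def by simp
    have N0I: "\<exists>i\<in>I. y = P ! i" if "y \<in> V" "E v0 y" for y
    proof -
      have "y \<in> set P" using N0P that by blast
      then obtain i where "i < length P" "y = P ! i" by (auto simp: in_set_conv_nth)
      then show ?thesis using that I_def by auto
    qed
    have e12: "3 \<le> length P \<Longrightarrow> E v1 (P ! 2)" using walk_nth[OF wP, of 1] v1_def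
      by (simp add: numeral_2_eq_2)
    show ?thesis
    proof (cases "2 \<le> a")
      case True
      have l3: "3 \<le> length P" using True al by simp
      define C0 where "C0 = set (take (Suc a) P)"
      have tk: "take (Suc a) P \<noteq> []" using Pne by simp
      have C0ns: "nonseparable E C0" unfolding C0_def
      proof (rule cycle_nonsep[OF sym])
        show "walk E (take (Suc a) P)" by (rule walk_take[OF wP])
        show "distinct (take (Suc a) P)" using dP by simp
        show "3 \<le> length (take (Suc a) P)" using True al by simp
        have "last (take (Suc a) P) = P ! a" using al tk by (simp add: last_conv_nth)
        moreover have "hd (take (Suc a) P) = v0" using hdP Pne by simp
        ultimately show "E (last (take (Suc a) P)) (hd (take (Suc a) P))" using ea sym by simp
      qed
      have C0V: "C0 \<subseteq> V" unfolding C0_def using sP by (meson set_take_subset subset_trans)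
      have inC0: "i \<le> a \<Longrightarrow> P ! i \<in> C0" for i unfolding C0_def using al by (intro nth_in_take) auto
      have v0C: "v0 \<in> C0" and v1C: "v1 \<in> C0" and v2C: "P ! 2 \<in> C0" and vaC: "P ! a \<in> C0"
        using inC0[of 0] inC0[of 1] inC0[of 2] inC0[of a] True v0_def v1_def by auto
      have N0: "{y \<in> V. E v0 y} \<subseteq> {v1, P ! a}"
      proof
        fix y assume y: "y \<in> {y \<in> V. E v0 y}"
        then obtain i where i: "i \<in> I" "y = P ! i" using N0I by blast
        have yC: "y \<in> C0" using inC0[of i] ile[OF i(1)] i(2) by simp
        have "v1 \<noteq> P ! a" using Pinj[of 1 a] True al l2 v1_def by simp
        show "y \<in> {v1, P ! a}"
        proof (rule ccontr)
          assume "y \<notin> {v1, P ! a}"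
          then show False
            using three_nbrs_false[OF fin cac C0V C0ns v0C v1C vaC yC \<open>v1 \<noteq> P ! a\<close>] e01 ea y by auto
        qed
      qed
      have good: "w \<notin> set P \<and> (\<forall>y\<in>V. E w y \<longrightarrow> y = v1)" if wW: "w \<in> W" for w
      proof (rule ccontr)
        assume "\<not> ?thesis"
        then have "w \<in> set P \<or> (\<exists>y\<in>V. E w y \<and> y \<noteq> v1)" by blast
        then obtain C where C: "C \<subseteq> V" "nonseparable E C" "w \<in> C" "v1 \<in> C" "P ! 2 \<in> C"
          using bad[OF wW] by blast
        have d12: "v1 \<noteq> P ! 2" using Pinj[of 1 2] l3 v1_def by simp
        have d02: "v0 \<noteq> P ! 2" using Pinj[of 0 2] l3 v0_def Pne by simp
        have wc: "w \<noteq> v0" "w \<noteq> P ! 2" "E v1 w" using wW l3 unfolding W_def by auto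
        show False
          using theta_false[OF fin cac C0V C0ns C(1,2) v1C C(4) v2C C(5) d12, of v1 v0 "P ! 2" w]
            v1C v0C v2C C(3) d02 wc e01 sym e12[OF l3] by auto
      qed
      show ?thesis
      proof (cases "\<exists>w\<in>W. \<exists>w'\<in>W. w \<noteq> w'")
        case True
        then obtain w w' where ww: "w \<in> W" "w' \<in> W" "w \<noteq> w'" by blast
        have nb: "nbhd E V {w, w'} \<subseteq> {w, w', v1, v1}" using good[OF ww(1)] good[OF ww(2)] by auto
        have sub: "{w, w'} \<subseteq> V" using ww unfolding W_def by auto
        have c2: "card {w, w'} = 2" using ww(3) by simp
        show ?thesis by (rule finish2[OF sub c2 nb])
      next
        case False
        show ?thesis
        proof (cases "W = {}")
          case True
          have nb: "nbhd E V {v0, v1} \<subseteq> {v0, v1, P ! a, P ! 2}" using N0 N1 True by auto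
          have sub: "{v0, v1} \<subseteq> V" using v0V v1V by simp
          have c2: "card {v0, v1} = 2" using v01 by simp
          show ?thesis by (rule finish2[OF sub c2 nb])
        next
          case Wne: False
          then obtain w where wW: "w \<in> W" by blast
          have Ww: "W \<subseteq> {w}" using False wW by blast
          have "v1 \<in> set P" using l2 v1_def by simp
          then have wv1: "v1 \<noteq> w" using good[OF wW] by blast
          have nb: "nbhd E V {v1, w} \<subseteq> {v1, w, v0, P ! 2}" using good[OF wW] N1 Ww by auto
          have sub: "{v1, w} \<subseteq> V" using wW v1V unfolding W_def by auto
          have c2: "card {v1, w} = 2" using wv1 by simp
          show ?thesis by (rule finish2[OF sub c2 nb])
        qed
      qed
    next
      case False
      then have a1': "a = 1" using a1 by simp
      have N0: "{y \<in> V. E v0 y} \<subseteq> {v1}"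
      proof
        fix y assume y: "y \<in> {y \<in> V. E v0 y}"
        then obtain i where i: "i \<in> I" "y = P ! i" using N0I by blast
        have "i \<le> 1" using ile[OF i(1)] a1' by simp
        moreover have "i \<noteq> 0" using i y irr v0_def by (cases i) auto
        ultimately have "i = 1" by simp
        then show "y \<in> {v1}" using i v1_def by simp
      qed
      have one_bad: "w = w'" if wW: "w \<in> W" "w' \<in> W"
        and b: "w \<in> set P \<or> (\<exists>y\<in>V. E w y \<and> y \<noteq> v1)" "w' \<in> set P \<or> (\<exists>y\<in>V. E w' y \<and> y \<noteq> v1)"
        for w w'
      proof (rule ccontr)
        assume nww: "w \<noteq> w'"
        obtain C where C: "C \<subseteq> V" "nonseparable E C" "w \<in> C" "v1 \<in> C" "P ! 2 \<in> C"
          and l3: "3 \<le> length P" using bad[OF wW(1) b(1)] by blast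
        obtain C' where C': "C' \<subseteq> V" "nonseparable E C'" "w' \<in> C'" "v1 \<in> C'" "P ! 2 \<in> C'"
          using bad[OF wW(2) b(2)] by blast
        have d12: "v1 \<noteq> P ! 2" using Pinj[of 1 2] l3 v1_def by simp
        have wc: "w \<noteq> P ! 2" "E v1 w" "w' \<noteq> P ! 2" "E v1 w'" using wW l3 unfolding W_def by auto
        show False
          using theta_false[OF fin cac C(1,2) C'(1,2) C(4) C'(4) C(5) C'(5) d12, of v1 "P ! 2" w w']
            C(3) C'(3) C(4) C(5) wc nww e12[OF l3] by auto
      qed
      show ?thesis
      proof (cases "\<exists>w\<in>W. \<exists>w'\<in>W. w \<noteq> w'")
        case True
        then obtain w w' where ww: "w \<in> W" "w' \<in> W" "w \<noteq> w'" by blast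
        obtain g where g: "g \<in> W" "g \<notin> set P" "\<forall>y\<in>V. E g y \<longrightarrow> y = v1"
          using one_bad[OF ww(1,2)] ww by blast
        have gv0: "v0 \<noteq> g" using g(1) unfolding W_def by auto
        have nb: "nbhd E V {v0, g} \<subseteq> {v0, g, v1, v1}" using N0 g(3) by auto
        have sub: "{v0, g} \<subseteq> V" using g(1) v0V unfolding W_def by auto
        have c2: "card {v0, g} = 2" using gv0 by simp
        show ?thesis by (rule finish2[OF sub c2 nb])
      next
        case False
        obtain w0 where Ww: "W \<subseteq> {w0}"
        proof (cases "W = {}")
          case True
          then show ?thesis using that by blast
        next
          case False
          then obtain w where "w \<in> W" by blast
          then show ?thesis using that \<open>\<not> (\<exists>w\<in>W. \<exists>w'\<in>W. w \<noteq> w')\<close> by blast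
        qed
        have nb: "nbhd E V {v0, v1} \<subseteq> {v0, v1, P ! 2, w0}" using N0 N1 Ww by auto
        have sub: "{v0, v1} \<subseteq> V" using v0V v1V by simp
        have c2: "card {v0, v1} = 2" using v01 by simp
        show ?thesis by (rule finish2[OF sub c2 nb])
      qed
    qed
  qed
qed



lemma bnd_4: "bnd (4 * k + s) = 2 * k + bnd s"
proof -
  have "(4 * k + s) mod 4 = s mod 4" by simp
  moreover have "(4 * k + s + 1) div 2 = 2 * k + (s + 1) div 2" by simp
  ultimately show ?thesis unfolding bnd_def by simp
qed
lemma bnd_add: "bnd (a + c) \<le> bnd a + bnd c"
proof -
  obtain p r where a: "a = 4*p + r" "r < 4" by (metis div_mult_mod_eq mod_less_divisor zero_less_numeral mult.commute)
  obtain q t where c: "c = 4*q + t" "t < 4" by (metis div_mult_mod_eq mod_less_divisor zero_less_numeral mult.commute)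
  have ac: "a + c = 4 * (p + q) + (r + t)" using a c by simp
  have "r = 0 \<or> r = 1 \<or> r = 2 \<or> r = 3" using a by auto
  moreover have "t = 0 \<or> t = 1 \<or> t = 2 \<or> t = 3" using c by auto
  ultimately have "bnd (r + t) \<le> bnd r + bnd t" by (elim disjE) (simp_all add: bnd_def)
  then show ?thesis unfolding ac unfolding a c bnd_4 by simp
qed

lemma main_sparse:
  assumes "finite V" "\<forall>x y. E x y \<longrightarrow> E y x" "\<forall>x. \<not> E x x" "cac E V"
  shows "\<exists>S \<subseteq> V. (\<forall>x\<in>S. deg_in E S x \<le> 1) \<and> bnd (card V) \<le> card S"
  using assms
proof (induction "card V" arbitrary: V rule: less_induct)
  case less
  show ?case
  proof (cases "V = {}")
    case True
    then show ?thesis by (intro exI[of _ "{}"]) (simp add: bnd_def)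
  next
    case False
    obtain T where T: "T \<subseteq> V" "T \<noteq> {}" "card T \<le> 2" "bnd (card (nbhd E V T)) \<le> card T"
      using good_T[OF less.prems(1) False less.prems(2,3,4)] by blast
    define X where "X = nbhd E V T"
    have XV: "X \<subseteq> V" using T(1) X_def by auto
    have TX: "T \<subseteq> X" by (simp add: X_def)
    have fV: "finite V" using less.prems(1) .
    have fX: "finite X" using XV fV finite_subset by blast
    have fT: "finite T" using TX fX finite_subset by blast
    have "V - X \<subset> V" using T(2) TX XV by blast
    then have lt: "card (V - X) < card V" using fV psubset_card_mono by blast
    have fVX: "finite (V - X)" using fV by simp
    have cVX: "cac E (V - X)" using cac_mono[OF less.prems(4)] by blast
    obtain S' where S': "S' \<subseteq> V - X" "\<forall>x\<in>S'. deg_in E S' x \<le> 1" "bnd (card (V - X)) \<le> card S'"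
      using less.hyps[OF lt fVX less.prems(2,3) cVX] by blast
    have fS': "finite S'" using S'(1) fVX finite_subset by blast
    define S where "S = S' \<union> T"
    have nbrT: "y \<in> X" if "x \<in> T" "y \<in> V" "E x y" for x y using that X_def by auto
    have deg: "deg_in E S x \<le> 1" if x: "x \<in> S" for x
    proof (cases "x \<in> T")
      case True
      have "{y \<in> S. E x y} \<subseteq> T - {x}"
      proof
        fix y assume y: "y \<in> {y \<in> S. E x y}"
        show "y \<in> T - {x}"
        proof (cases "y \<in> S'")
          case True
          then have "y \<in> V" "y \<notin> X" using S'(1) by auto
          then show ?thesis using nbrT[OF \<open>x \<in> T\<close>] y by auto
        next
          case False
          then show ?thesis using y less.prems(3) S_def by auto
        qed
      qed
      then have "deg_in E S x \<le> card (T - {x})" unfolding deg_in_def using fT by (intro card_mono) auto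
      also have "\<dots> = card T - 1" using True fT by simp
      finally show ?thesis using T(3) by simp
    next
      case False
      then have xS': "x \<in> S'" using x S_def by simp
      have "{y \<in> S. E x y} = {y \<in> S'. E x y}"
      proof -
        have "\<not> E x y" if "y \<in> T" for y
        proof
          assume "E x y"
          then have "E y x" using less.prems(2) by blast
          moreover have "x \<in> V" using xS' S'(1) by auto
          ultimately have "x \<in> X" using nbrT[OF that] by blast
          then show False using xS' S'(1) by auto
        qed
        then show ?thesis using S_def by auto
      qed
      then show ?thesis using S'(2) xS' unfolding deg_in_def by simp
    qed
    have disj: "S' \<inter> T = {}" using S'(1) TX by auto
    have cS: "card S = card S' + card T" unfolding S_def using card_Un_disjoint[OF fS' fT disj] .
    have cV: "card V = card (V - X) + card X" using card_Diff_subset[OF fX XV] card_mono[OF fV XV] by simp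
    have "bnd (card V) \<le> bnd (card (V - X)) + bnd (card X)" unfolding cV by (rule bnd_add)
    also have "\<dots> \<le> card S' + card T" using S'(3) T(4) X_def by simp
    finally have "bnd (card V) \<le> card S" using cS by simp
    moreover have "S \<subseteq> V" using S'(1) T(1) S_def by auto
    ultimately show ?thesis using deg by blast
  qed
qed

lemma cactus_cac:
  assumes ca: "cactus V E"
  shows "cac E V"
  unfolding cac_def
proof (intro allI impI ballI)
  fix S x assume S: "S \<subseteq> V" "nonseparable E S" "3 \<le> card S" and x: "x \<in> S"
  have finV: "finite V" using ca by (simp add: cactus_def simple_graph_def)
  define F where "F = {B. S \<subseteq> B \<and> B \<subseteq> V \<and> nonseparable E B}"
  have finF: "finite F"
  proof -
    have "F \<subseteq> Pow V" unfolding F_def by auto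
    then show ?thesis using finV finite_subset by blast
  qed
  have SF: "S \<in> F" unfolding F_def using S by simp
  have fc: "finite (card ` F)" using finF by simp
  have nec: "card ` F \<noteq> {}" using SF by blast
  obtain B where B: "B \<in> F" "card B = Max (card ` F)" using Max_in[OF fc nec] by auto
  have maxB: "card B' \<le> card B" if "B' \<in> F" for B' using Max_ge[OF fc] that B(2) by simp
  have BV: "B \<subseteq> V" "nonseparable E B" "S \<subseteq> B" using B(1) F_def by auto
  have fB: "finite B" using BV(1) finV finite_subset by blast
  have blk: "is_block V E B"
    unfolding is_block_def
  proof (intro conjI allI impI)
    show "B \<subseteq> V" "nonseparable E B" using BV by auto
  next
    fix B' assume B': "B \<subset> B' \<and> B' \<subseteq> V"
    show "\<not> nonseparable E B'"
    proof
      assume ns: "nonseparable E B'"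
      then have "B' \<in> F" using B' BV unfolding F_def by auto
      then have "card B' \<le> card B" by (rule maxB)
      moreover have "card B < card B'" using B' finV finite_subset psubset_card_mono by metis
      ultimately show False by simp
    qed
  qed
  have "card S \<le> card B" using card_mono[OF fB BV(3)] .
  then have "\<not> card B \<le> 2" using S(3) by simp
  then have "\<forall>y\<in>B. deg_in E B y = 2" using ca blk unfolding cactus_def by blast
  then have "deg_in E B x = 2" using x BV(3) by blast
  moreover have "deg_in E S x \<le> deg_in E B x" unfolding deg_in_def
    using fB BV(3) by (intro card_mono) auto
  ultimately show "deg_in E S x \<le> 2" by simp
qed

lemma mindeg:
  assumes fin: "finite B" and ns: "nonseparable E B" and c3: "3 \<le> card B" and x: "x \<in> B"
    and irr: "\<forall>x. \<not> E x x"
  shows "2 \<le> deg_in E B x"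
proof (rule ccontr)
  assume "\<not> ?thesis"
  then have le1: "card {y \<in> B. E x y} \<le> Suc 0" unfolding deg_in_def by simp
  have fN: "finite {y \<in> B. E x y}" using fin by simp
  have step: "False" if R: "(rel E B')\<^sup>*\<^sup>* x z" "x \<noteq> z" "\<forall>w\<in>B'. \<not> E x w" for B' z
    using R(1)
  proof (cases rule: converse_rtranclpE)
    case base
    then show ?thesis using R(2) by simp
  next
    case (step w)
    then show ?thesis using R(3) by auto
  qed
  show False
  proof (cases "{y \<in> B. E x y} = {}")
    case True
    have "\<not> B \<subseteq> {x}"
    proof
      assume "B \<subseteq> {x}"
      then have "card B \<le> card {x}" by (intro card_mono) auto
      then show False using c3 by simp
    qed
    then obtain z where z: "z \<in> B" "z \<noteq> x" by blast
    have "(rel E B)\<^sup>*\<^sup>* x z" using ns x z unfolding nonseparable_def connected_in_def by blast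
    then show False using step[of B z] True z by auto
  next
    case False
    then obtain y where y: "y \<in> B" "E x y" by blast
    have uniq: "y' = y" if "y' \<in> B" "E x y'" for y'
      using le1 card_le_Suc0_iff_eq[OF fN] that y by blast
    have xy: "x \<noteq> y" using y irr by auto
    have "\<not> B \<subseteq> {x, y}"
    proof
      assume "B \<subseteq> {x, y}"
      then have "card B \<le> card {x, y}" by (intro card_mono) auto
      also have "\<dots> \<le> 2" by (simp add: card_insert_if)
      finally show False using c3 by simp
    qed
    then obtain z where z: "z \<in> B" "z \<noteq> x" "z \<noteq> y" by blast
    have "B - {y} \<noteq> {}" using x xy by blast
    then have "connected_in E (B - {y})" using ns y(1) unfolding nonseparable_def by blast
    then have "(rel E (B - {y}))\<^sup>*\<^sup>* x z" using x xy z unfolding connected_in_def by blast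
    moreover have "\<forall>w\<in>B - {y}. \<not> E x w" using uniq by blast
    ultimately show False using step z(2) by blast
  qed
qed

lemma maxdeg2_cactus:
  assumes sg: "simple_graph V E" and md: "\<forall>x\<in>V. card {y \<in> V. E x y} \<le> 2"
  shows "cactus V E"
  unfolding cactus_def
proof (intro conjI allI impI)
  show "simple_graph V E" by (rule sg)
next
  fix B assume blk: "is_block V E B"
  have finV: "finite V" and irr: "\<forall>x. \<not> E x x" using sg unfolding simple_graph_def by auto
  have BV: "B \<subseteq> V" "nonseparable E B" using blk unfolding is_block_def by auto
  have fB: "finite B" using BV(1) finV finite_subset by blast
  show "card B \<le> 2 \<or> 3 \<le> card B \<and> (\<forall>x\<in>B. deg_in E B x = 2)"
  proof (cases "card B \<le> 2")
    case False
    then have c3: "3 \<le> card B" by simp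
    have "deg_in E B x = 2" if x: "x \<in> B" for x
    proof -
      have "2 \<le> deg_in E B x" using mindeg[OF fB BV(2) c3 x irr] .
      moreover have "deg_in E B x \<le> card {y \<in> V. E x y}" unfolding deg_in_def
        using finV BV(1) by (intro card_mono) auto
      moreover have "card {y \<in> V. E x y} \<le> 2" using md x BV(1) by blast
      ultimately show ?thesis by simp
    qed
    then show ?thesis using c3 by blast
  qed simp
qed

lemma conn_by2:
  assumes "S \<noteq> {}" "\<forall>u\<in>S. \<forall>v\<in>S. u \<noteq> v \<longrightarrow> E u v \<or> (\<exists>w\<in>S. E u w \<and> E w v)"
  shows "connected_in E S"
  unfolding connected_in_def
proof (intro conjI ballI)
  show "S \<noteq> {}" by (rule assms(1))
next
  fix u v assume uv: "u \<in> S" "v \<in> S"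
  show "(rel E S)\<^sup>*\<^sup>* u v"
  proof (cases "u = v")
    case False
    then consider "E u v" | w where "w \<in> S" "E u w" "E w v" using assms(2) uv by blast
    then show ?thesis
    proof cases
      case 1
      then show ?thesis using uv by (intro r_into_rtranclp) simp
    next
      case 2
      then have r1: "rel E S u w" and r2: "rel E S w v" using uv by auto
      show ?thesis by (rule converse_rtranclp_into_rtranclp[OF r1 r_into_rtranclp[of "rel E S", OF r2]])
    qed
  qed simp
qed

lemma no_dense:
  assumes fin: "finite V" and sym: "\<forall>x y. E x y \<longrightarrow> E y x" and irr: "\<forall>x. \<not> E x x"
    and cac: "cac E V" and i5: "5 \<le> i" and d: "dense_set E V 1 i S"
  shows False
proof -
  have S: "S \<subseteq> V" "card S = i" and nn: "\<forall>x\<in>S. card {y \<in> S. x \<noteq> y \<and> \<not> E x y} \<le> 1"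
    using d unfolding dense_set_def sparse_set_def deg_in_def by auto
  have fS: "finite S" using S(1) fin finite_subset by blast
  define NN where "NN x = {y \<in> S. x \<noteq> y \<and> \<not> E x y}" for x
  have fNN: "finite (NN x)" for x using fS NN_def by simp
  have NNu: "y' = y" if "x \<in> S" "y \<in> NN x" "y' \<in> NN x" for x y y'
    using nn that card_le_Suc0_iff_eq[OF fNN, of x] NN_def by auto
  have common: "\<exists>w\<in>S. w \<notin> {u, v, z} \<and> E u w \<and> E w v"
    if uv: "u \<in> S" "v \<in> S" "u \<noteq> v" "\<not> E u v" for u v z
  proof -
    have "\<not> S \<subseteq> {u, v, z}"
    proof
      assume "S \<subseteq> {u, v, z}"
      then have "card S \<le> card {u, v, z}" by (intro card_mono) auto
      also have "\<dots> \<le> 3" by (simp add: card_insert_if)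
      finally show False using S(2) i5 by simp
    qed
    then obtain w where w: "w \<in> S" "w \<notin> {u, v, z}" by blast
    have vN: "v \<in> NN u" using uv NN_def by auto
    have uN: "u \<in> NN v" using uv sym NN_def by auto
    have "w \<notin> NN u" using NNu[OF uv(1) vN] w by blast
    then have "E u w" using w uv NN_def by auto
    moreover have "w \<notin> NN v" using NNu[OF uv(2) uN] w by blast
    then have "E w v" using w uv NN_def sym by auto
    ultimately show ?thesis using w by blast
  qed
  have Sne: "S - {z} \<noteq> {}" for z
  proof
    assume "S - {z} = {}"
    then have "S \<subseteq> {z}" by blast
    then have "card S \<le> 1" using card_mono[of "{z}" S] by simp
    then show False using S(2) i5 by simp
  qed
  have connz: "connected_in E (S - {z})" for z
  proof (rule conn_by2[OF Sne])
    show "\<forall>u\<in>S - {z}. \<forall>v\<in>S - {z}. u \<noteq> v \<longrightarrow> E u v \<or> (\<exists>w\<in>S - {z}. E u w \<and> E w v)"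
      using common[of _ _ z] by blast
  qed
  have conn: "connected_in E S"
  proof (rule conn_by2)
    show "S \<noteq> {}" using Sne by blast
    show "\<forall>u\<in>S. \<forall>v\<in>S. u \<noteq> v \<longrightarrow> E u v \<or> (\<exists>w\<in>S. E u w \<and> E w v)"
      using common[of _ _ undefined] by blast
  qed
  have ns: "nonseparable E S" unfolding nonseparable_def using conn connz by blast
  obtain x where x: "x \<in> S" using Sne by blast
  have d2: "deg_in E S x \<le> 2" using cac S i5 ns x unfolding cac_def by auto
  have "S - {x} \<subseteq> {y \<in> S. E x y} \<union> NN x" using NN_def by auto
  then have "card (S - {x}) \<le> card ({y \<in> S. E x y} \<union> NN x)" using fS fNN by (intro card_mono) auto
  also have "\<dots> \<le> card {y \<in> S. E x y} + card (NN x)" by (rule card_Un_le)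
  also have "\<dots> \<le> deg_in E S x + 1"
  proof -
    have "card (NN x) \<le> 1" using nn x NN_def by simp
    then show ?thesis by (simp add: deg_in_def)
  qed
  finally have "card S - 1 \<le> deg_in E S x + 1" using x fS by simp
  then show False using d2 S(2) i5 by simp
qed



definition Eg :: "nat \<Rightarrow> nat \<Rightarrow> nat \<Rightarrow> bool" where
  "Eg m x y \<longleftrightarrow> x < m \<and> y < m \<and> x div 4 = y div 4 \<and> odd (x + y)"

lemma Eg_simple: "simple_graph {0..<m} (Eg m)"
  unfolding simple_graph_def Eg_def by (auto simp: add.commute)

lemma Eg_nbrs:
  fixes x y :: nat
  assumes "y div 4 = x div 4" "odd (x + y)"
  shows "y = 4 * (x div 4) + (if even x then 1 else 0) \<or> y = 4 * (x div 4) + (if even x then 3 else 2)"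
proof -
  define q where "q = x div 4"
  define a where "a = x mod 4"
  define b where "b = y mod 4"
  have x: "x = 4 * q + a" unfolding q_def a_def by simp
  have y: "y = 4 * q + b" unfolding q_def b_def using assms(1) by (metis div_mult_mod_eq mult.commute)
  have "a < 4" "b < 4" unfolding a_def b_def by auto
  then have "a \<in> {0,1,2,3}" "b \<in> {0,1,2,3}" by auto
  then show ?thesis using assms(2) unfolding x y by auto
qed
lemma Eg_deg: "card {y \<in> {0..<m}. Eg m x y} \<le> 2"
proof -
  let ?a = "4 * (x div 4) + (if even x then 1 else 0)" and ?b = "4 * (x div 4) + (if even x then 3 else 2)"
  have "{y \<in> {0..<m}. Eg m x y} \<subseteq> {?a, ?b}"
  proof
    fix y assume "y \<in> {y \<in> {0..<m}. Eg m x y}"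
    then have "y div 4 = x div 4" "odd (x + y)" unfolding Eg_def by auto
    then show "y \<in> {?a, ?b}" using Eg_nbrs[of y x] by blast
  qed
  then have "card {y \<in> {0..<m}. Eg m x y} \<le> card {?a, ?b}" by (intro card_mono) auto
  also have "\<dots> \<le> 2" by (simp add: card_insert_if)
  finally show ?thesis .
qed

lemma Eg_cactus: "cactus {0..<m} (Eg m)"
  using maxdeg2_cactus[OF Eg_simple] Eg_deg by blast

lemma Eg_block:
  assumes sp: "\<forall>x\<in>S. deg_in (Eg m) S x \<le> 1" and Sm: "S \<subseteq> {0..<m}"
  shows "card (S \<inter> {4*q..<4*q+4}) \<le> 2"
proof (rule ccontr)
  assume c: "\<not> ?thesis"
  let ?A = "S \<inter> {4*q..<4*q+4}"
  have fS: "finite S" using Sm finite_subset by blast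
  have blk: "{4*q..<4*q+4} = {4*q, 4*q+1, 4*q+2, 4*q+3}" by auto
  have adj: "Eg m y z" if "y \<in> S" "z \<in> S" "y \<in> {4*q+1, 4*q+3}" "z \<in> {4*q, 4*q+2}" for y z
  proof -
    have "y < m" "z < m" using that Sm by auto
    moreover have "y div 4 = q" "z div 4 = q" using that(3,4) by auto
    moreover have "odd (y + z)" using that(3,4) by auto
    ultimately show ?thesis unfolding Eg_def by simp
  qed
  have two: False if y: "y \<in> S" and p: "p \<in> S" "r \<in> S" "p \<noteq> r" "Eg m y p" "Eg m y r"
    for y p r
  proof -
    have "{p, r} \<subseteq> {z \<in> S. Eg m y z}" using p by auto
    then have "card {p, r} \<le> deg_in (Eg m) S y" unfolding deg_in_def using fS by (intro card_mono) auto
    moreover have "card {p, r} = 2" using p(3) by simp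
    ultimately show False using sp y by fastforce
  qed
  show False
  proof (cases "4*q \<in> S \<and> 4*q+2 \<in> S")
    case True
    show False
    proof (cases "4*q+1 \<in> S \<or> 4*q+3 \<in> S")
      case True
      then obtain y where "y \<in> S" "y \<in> {4*q+1, 4*q+3}" by blast
      then show False using two[of y "4*q" "4*q+2"] adj[of y "4*q"] adj[of y "4*q+2"] \<open>4*q \<in> S \<and> 4*q+2 \<in> S\<close> by auto
    next
      case False
      then have "?A \<subseteq> {4*q, 4*q+2}" using blk by auto
      then have "card ?A \<le> card {4*q, 4*q+2}" by (intro card_mono) auto
      then show False using c by (simp add: card_insert_if)
    qed
  next
    case nE: False
    show False
    proof (cases "4*q+1 \<in> S \<and> 4*q+3 \<in> S")
      case True
      show False
      proof (cases "4*q \<in> S \<or> 4*q+2 \<in> S")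
        case True
        then obtain z where "z \<in> S" "z \<in> {4*q, 4*q+2}" by blast
        moreover have "Eg m z y" if "y \<in> S" "y \<in> {4*q+1, 4*q+3}" for y
          using adj[of y z] that \<open>z \<in> S\<close> \<open>z \<in> {4*q, 4*q+2}\<close> unfolding Eg_def by (auto simp: add.commute)
        ultimately show False using two[of z "4*q+1" "4*q+3"] \<open>4*q+1 \<in> S \<and> 4*q+3 \<in> S\<close> by auto
      next
        case False
        then have "?A \<subseteq> {4*q+1, 4*q+3}" using blk by auto
        then have "card ?A \<le> card {4*q+1, 4*q+3}" by (intro card_mono) auto
        then show False using c by (simp add: card_insert_if)
      qed
    next
      case False
      obtain e where e: "?A \<inter> {4*q, 4*q+2} \<subseteq> {e}"
        using nE by (cases "4*q \<in> S") auto
      obtain od where od: "?A \<inter> {4*q+1, 4*q+3} \<subseteq> {od}"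
        using False by (cases "4*q+1 \<in> S") auto
      have "?A \<subseteq> {e, od}" using e od blk by blast
      then have "card ?A \<le> card {e, od}" by (intro card_mono) auto
      then show False using c by (simp add: card_insert_if split: if_splits)
    qed
  qed
qed

lemma count_blocks:
  assumes "\<forall>q. card (S \<inter> {4*q..<4*q+4}) \<le> (2::nat)"
  shows "card (S \<inter> {0..<4*t}) \<le> 2*t"
proof (induction t)
  case 0
  then show ?case by simp
next
  case (Suc t)
  have "S \<inter> {0..<4 * Suc t} = (S \<inter> {0..<4*t}) \<union> (S \<inter> {4*t..<4*t+4})" by auto
  then have "card (S \<inter> {0..<4 * Suc t}) \<le> card (S \<inter> {0..<4*t}) + card (S \<inter> {4*t..<4*t+4})"
    by (simp add: card_Un_le)
  then show ?case using Suc assms[rule_format, of t] by simp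
qed

lemma Eg_sparse_bound:
  assumes sp: "\<forall>x\<in>S. deg_in (Eg m) S x \<le> 1" and Sm: "S \<subseteq> {0..<m}"
  shows "card S \<le> 2 * (m div 4) + min (m mod 4) 2"
proof -
  define t where "t = m div 4"
  have bl: "\<forall>q. card (S \<inter> {4*q..<4*q+4}) \<le> 2" using Eg_block[OF sp Sm] by blast
  have m: "m = 4 * t + m mod 4" unfolding t_def by simp
  have "S = (S \<inter> {0..<4*t}) \<union> (S \<inter> {4*t..<m})" using Sm m by auto
  then have "card S \<le> card (S \<inter> {0..<4*t}) + card (S \<inter> {4*t..<m})"
    by (metis card_Un_le)
  moreover have "card (S \<inter> {0..<4*t}) \<le> 2 * t" using count_blocks[OF bl] .
  moreover have "card (S \<inter> {4*t..<m}) \<le> m mod 4"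
  proof -
    have "card (S \<inter> {4*t..<m}) \<le> card {4*t..<m}" by (intro card_mono) auto
    then show ?thesis using m by simp
  qed
  moreover have "card (S \<inter> {4*t..<m}) \<le> 2"
  proof -
    have "S \<inter> {4*t..<m} \<subseteq> S \<inter> {4*t..<4*t+4}" using m by auto
    then have "card (S \<inter> {4*t..<m}) \<le> card (S \<inter> {4*t..<4*t+4})" by (intro card_mono) auto
    then show ?thesis using bl by (meson order_trans)
  qed
  ultimately show ?thesis unfolding t_def by linarith
qed

lemma N_bound: "1 \<le> j \<Longrightarrow> j \<le> bnd (if odd j then 2 * j - 1 else 2 * j - 2)"
proof (cases "odd j")
  case True
  then obtain s where j: "j = 2 * s + 1" by (metis oddE)
  then have "2 * j - 1 = 4 * s + 1" by simp
  then show ?thesis using True bnd_4[of s 1] j by (simp add: bnd_def)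
next
  case False
  assume "1 \<le> j"
  obtain k where k: "j = 2 * k" using False by (metis evenE)
  then have "k \<ge> 1" using \<open>1 \<le> j\<close> by simp
  then obtain s where "k = s + 1" by (metis le_add_diff_inverse2)
  then have j: "j = 2 * s + 2" using k by simp
  then have "2 * j - 2 = 4 * s + 2" by simp
  then show ?thesis using False bnd_4[of s 2] j by (simp add: bnd_def)
qed
lemma N_low:
  assumes "(m::nat) < (if odd j then 2 * j - 1 else 2 * j - 2)"
  shows "2 * (m div 4) + min (m mod 4) 2 < j"
proof -
  define t where "t = m div 4"
  define r where "r = m mod 4"
  have goal: "2 * (m div 4) + min (m mod 4) 2 = 2 * t + min r 2" unfolding t_def r_def ..
  have m: "m = 4 * t + r" unfolding t_def r_def by simp
  have "min r 2 \<le> 2" "min r 2 \<le> r" by auto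
  have "2 * t + min r 2 < j"
  proof (cases "odd j")
    case True
    then obtain s where j: "j = 2 * s + 1" by (metis oddE)
    then have "m \<le> 4 * s" using assms True by simp
    show ?thesis
    proof (cases "t < s")
      case True
      then show ?thesis using m \<open>min r 2 \<le> 2\<close> j by linarith
    next
      case False
      then have "r = 0" using m \<open>m \<le> 4 * s\<close> by linarith
      then show ?thesis using m \<open>m \<le> 4 * s\<close> j by simp
    qed
  next
    case False
    then obtain s where j: "j = 2 * s" by (metis evenE)
    then have "m + 3 \<le> 4 * s" using assms False by simp
    show ?thesis
    proof (cases "t + 1 < s")
      case True
      then show ?thesis using m \<open>min r 2 \<le> 2\<close> j by linarith
    next
      case False
      then have "r \<le> 1" using m \<open>m + 3 \<le> 4 * s\<close> by linarith
      then show ?thesis using m \<open>m + 3 \<le> 4 * s\<close> \<open>min r 2 \<le> r\<close> j by linarith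
    qed
  qed
  then show ?thesis unfolding goal .
qed

theorem theorem4p2:
  fixes i j :: nat
  assumes "i \<ge> 5" and "j \<ge> 1"
  shows "ramsey_class cactus 1 i j = (if odd j then 2 * j - 1 else 2 * j - 2)"
proof -
  define N where "N = (if odd j then 2 * j - 1 else 2 * j - 2)"
  define Pr where "Pr (n::nat) \<longleftrightarrow> (\<forall>E. simple_graph {0..<n} E \<and> cactus {0..<n} E \<longrightarrow>
      (\<exists>S. dense_set E {0..<n} 1 i S) \<or> (\<exists>S. sparse_set E {0..<n} 1 j S))" for n
  have up: "Pr N" unfolding Pr_def
  proof (intro allI impI)
    fix E assume a: "simple_graph {0..<N} E \<and> cactus {0..<N} E"
    have fin: "finite {0..<N}" by simp
    have sym: "\<forall>x y. E x y \<longrightarrow> E y x" and irr: "\<forall>x. \<not> E x x"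
      using a unfolding simple_graph_def by auto
    have cac: "cac E {0..<N}" using cactus_cac a by blast
    obtain S where S: "S \<subseteq> {0..<N}" "\<forall>x\<in>S. deg_in E S x \<le> 1" "bnd (card {0..<N}) \<le> card S"
      using main_sparse[OF fin sym irr cac] by blast
    have fS: "finite S" using S(1) finite_subset by blast
    have "j \<le> card S" using S(3) N_bound[OF assms(2)] N_def by simp
    then obtain S' where S': "S' \<subseteq> S" "card S' = j" by (meson obtain_subset_with_card_n)
    have "deg_in E S' x \<le> 1" if "x \<in> S'" for x
    proof -
      have "deg_in E S' x \<le> deg_in E S x" unfolding deg_in_def using fS S'(1) by (intro card_mono) auto
      then show ?thesis using S(2) S'(1) that by fastforce
    qed
    then have "sparse_set E {0..<N} 1 j S'" unfolding sparse_set_def using S'(2) S'(1) S(1) by blast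
    then show "(\<exists>S. dense_set E {0..<N} 1 i S) \<or> (\<exists>S. sparse_set E {0..<N} 1 j S)" by blast
  qed
  have low: "\<not> Pr m" if m: "m < N" for m
  proof
    assume "Pr m"
    then have "(\<exists>S. dense_set (Eg m) {0..<m} 1 i S) \<or> (\<exists>S. sparse_set (Eg m) {0..<m} 1 j S)"
      unfolding Pr_def using Eg_simple Eg_cactus by blast
    then show False
    proof
      assume "\<exists>S. dense_set (Eg m) {0..<m} 1 i S"
      then obtain S where d: "dense_set (Eg m) {0..<m} 1 i S" by blast
      have sg: "simple_graph {0..<m} (Eg m)" by (rule Eg_simple)
      have sym: "\<forall>x y. Eg m x y \<longrightarrow> Eg m y x" and irr: "\<forall>x. \<not> Eg m x x"
        using sg unfolding simple_graph_def by auto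
      show False using no_dense[OF _ sym irr cactus_cac[OF Eg_cactus] assms(1) d] by simp
    next
      assume "\<exists>S. sparse_set (Eg m) {0..<m} 1 j S"
      then obtain S where sp: "sparse_set (Eg m) {0..<m} 1 j S" by blast
      then have "card S \<le> 2 * (m div 4) + min (m mod 4) 2"
        using Eg_sparse_bound unfolding sparse_set_def by blast
      moreover have "card S = j" using sp unfolding sparse_set_def by simp
      ultimately show False using N_low[of m j] m N_def by simp
    qed
  qed
  have "ramsey_class cactus 1 i j = (LEAST n. Pr n)" unfolding ramsey_class_def Pr_def by simp
  also have "\<dots> = N"
  proof (rule Least_equality)
    show "Pr N" by (rule up)
  next
    fix y assume "Pr y"
    then show "N \<le> y" using low by (meson not_le)
  qed
  finally show ?thesis unfolding N_def .
qed

end
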